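(* (i) Let $A_1 = \begin{pmatrix} \frac{\sqrt{2}}{2} & 0 \\ 0 & \frac{\sqrt{2}}{2} \end{pmatrix}$ and $B_1 = \begin{pmatrix} 0 & x \\ y & 0 \end{pmatrix}$, where $x,y\in\mathbb{C}$ satisfy $|x|,|y| \leq \frac{\sqrt{2}}{2}$ and are not both zero. Then there exist $p_1, p_2\in \mathbb{C} \setminus \{0\}$ satisfying $|p_1|^2 + |p_2|^2 = 1$ such that the maximal singular value of the matrix $C_1 = p_1 A_1 + p_2 B_1$ is strictly greater than $\frac{\sqrt{2}}{2}$. (ii) Let $A_2=\begin{pmatrix} \frac{\sqrt{2}}{2} & 0 \\ 0 & 0 \end{pmatrix}$ and $B_2=\begin{pmatrix} 0 & \frac{\sqrt{2}}{2} \\ z & 0 \end{pmatrix}$, where $z\in\mathbb{C}$ satisfies $0<|z| \leq \frac{\sqrt{2}}{2}$. Then there exist $p_1, p_2\in \mathbb{C} \setminus \{0\}$ satisfying $|p_1|^2 + |p_2|^2 = 1$ such that the maximal singular value of the matrix $C_2= p_1 A_2 + p_2 B_2$ is strictly greater than $\frac{\sqrt{2}}{2}$.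
   Context: All matrices are $2\times 2$ complex matrices; the maximal singular value of a matrix $C$ is the square root of the largest eigenvalue of $C^\dagger C$. *)

theory Defs
  imports "HOL-Analysis.Analysis"
begin

definition mat2 :: "complex \<Rightarrow> complex \<Rightarrow> complex \<Rightarrow> complex \<Rightarrow> complex^2^2" where
  "mat2 a b c d = (\<chi> i j. if i = 1 then (if j = 1 then a else b) else (if j = 1 then c else d))"

definition mat_scale :: "complex \<Rightarrow> complex^2^2 \<Rightarrow> complex^2^2" where
  "mat_scale c M = (\<chi> i j. c * M $ i $ j)"

definition adj_mat :: "complex^2^2 \<Rightarrow> complex^2^2" where
  "adj_mat C = (\<chi> i j. cnj (C $ j $ i))"

definition eigenvalues_mat :: "complex^2^2 \<Rightarrow> complex set" where
  "eigenvalues_mat M = {l. \<exists>v. v \<noteq> 0 \<and> M *v v = l *s v}"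

text \<open>Maximal singular value: square root of the largest eigenvalue of C^dagger C
  (these eigenvalues are real since C^dagger C is Hermitian).\<close>
definition max_singular_value :: "complex^2^2 \<Rightarrow> real" where
  "max_singular_value C = sqrt (Max (Re ` eigenvalues_mat (adj_mat C ** C)))"

end

theory Submission
  imports Defs "HOL-Computational_Algebra.Polynomial"
begin

lemma eig_char:
  fixes M :: "complex^2^2"
  assumes "(l - M$1$1)*(l - M$2$2) = M$1$2 * M$2$1"
  shows "l \<in> eigenvalues_mat M"
proof -
  define a b c d where "a = M$1$1" "b = M$1$2" "c = M$2$1" "d = M$2$2"
  have ch: "(l - a)*(l - d) = b*c" using assms by (simp add: a_b_c_d_def)
  have mv: "M *v v = l *s v \<longleftrightarrow> a* v$1 + b* v$2 = l* v$1 \<and> c* v$1 + d* v$2 = l* v$2" for v :: "complex^2"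
    by (simp add: vec_eq_iff forall_2 matrix_vector_mult_def sum_2 a_b_c_d_def)
  have ex: "\<exists>v1 v2. (v1 \<noteq> 0 \<or> v2 \<noteq> 0) \<and> a* v1 + b* v2 = l* v1 \<and> c* v1 + d* v2 = l* v2"
  proof (cases "b = 0")
    case False
    then show ?thesis using ch by (intro exI[of _ b] exI[of _ "l - a"]) (auto simp: algebra_simps)
  next
    case b0: True
    show ?thesis
    proof (cases "c = 0")
      case False
      then show ?thesis using ch b0 by (intro exI[of _ "l - d"] exI[of _ c]) (auto simp: algebra_simps)
    next
      case True
      then have "l = a \<or> l = d" using ch b0 by auto
      then show ?thesis using b0 True
        by (metis add.right_neutral mult_1_right mult_zero_left mult_zero_right one_neq_zero add_0)
    qed
  qed
  then obtain v1 v2 where v: "v1 \<noteq> 0 \<or> v2 \<noteq> 0" "a* v1 + b* v2 = l* v1" "c* v1 + d* v2 = l* v2" by blast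
  define v :: "complex^2" where "v = (\<chi> i. if i = 1 then v1 else v2)"
  have "v \<noteq> 0" using v(1) by (auto simp: v_def vec_eq_iff forall_2)
  moreover have "M *v v = l *s v" using v(2,3) by (simp add: mv v_def)
  ultimately show ?thesis unfolding eigenvalues_mat_def by blast
qed

lemma eig_fin:
  fixes M :: "complex^2^2"
  shows "finite (eigenvalues_mat M)"
proof -
  define a b c d where "a = M$1$1" "b = M$1$2" "c = M$2$1" "d = M$2$2"
  let ?p = "[:a*d - b*c, -(a+d), 1:]"
  have "eigenvalues_mat M \<subseteq> {l. poly ?p l = 0}"
  proof
    fix l assume "l \<in> eigenvalues_mat M"
    then obtain v where v: "v \<noteq> 0" "M *v v = l *s v" unfolding eigenvalues_mat_def by blast
    have e: "a* v$1 + b* v$2 = l* v$1" "c* v$1 + d* v$2 = l* v$2"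
      using v(2) by (simp_all add: vec_eq_iff forall_2 matrix_vector_mult_def sum_2 a_b_c_d_def)
    have z1: "(a-l)* v$1 + b* v$2 = 0" "c* v$1 + (d-l)* v$2 = 0" using e by (auto simp: algebra_simps)
    have "((l-a)*(l-d) - b*c) * v$1 = (d-l)*((a-l)* v$1 + b* v$2) - b*(c* v$1 + (d-l)* v$2)"
      by (simp add: algebra_simps)
    then have "((l-a)*(l-d) - b*c) * v$1 = 0" using z1 by simp
    moreover have "((l-a)*(l-d) - b*c) * v$2 = (a-l)*(c* v$1 + (d-l)* v$2) - c*((a-l)* v$1 + b* v$2)"
      by (simp add: algebra_simps)
    then have "((l-a)*(l-d) - b*c) * v$2 = 0" using z1 by simp
    moreover have "v$1 \<noteq> 0 \<or> v$2 \<noteq> 0" using v(1) by (auto simp: vec_eq_iff forall_2)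
    ultimately have "(l-a)*(l-d) - b*c = 0" by auto
    then show "l \<in> {l. poly ?p l = 0}" by (simp add: algebra_simps)
  qed
  moreover have "?p \<noteq> 0" by simp
  ultimately show ?thesis using poly_roots_finite finite_subset by blast
qed


lemma H_entries:
  fixes a b c d :: complex
  defines "H \<equiv> adj_mat (mat2 a b c d) ** mat2 a b c d"
  shows "H$1$1 = cnj a*a + cnj c*c" "H$1$2 = cnj a*b + cnj c*d"
        "H$2$1 = cnj b*a + cnj d*c" "H$2$2 = cnj b*b + cnj d*d"
  by (simp_all add: H_def adj_mat_def mat2_def matrix_matrix_mult_def sum_2)

lemma msv_gt:
  fixes a b c d :: complex
  assumes "2*cmod(cnj a*b + cnj c*d) > 1 - (cmod a^2 + cmod b^2 + cmod c^2 + cmod d^2)"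
  shows "max_singular_value (mat2 a b c d) > sqrt 2 / 2"
proof -
  define H where "H = adj_mat (mat2 a b c d) ** mat2 a b c d"
  define A where "A = cmod a^2 + cmod c^2"
  define D where "D = cmod b^2 + cmod d^2"
  define q where "q = cnj a*b + cnj c*d"
  define r where "r = sqrt ((A-D)^2 + 4*cmod q^2)"
  have H11: "H$1$1 = of_real A" unfolding H_def H_entries A_def
    by (simp only: of_real_add complex_norm_square) (simp add: mult.commute)
  have H22: "H$2$2 = of_real D" unfolding H_def H_entries D_def
    by (simp only: of_real_add complex_norm_square) (simp add: mult.commute)
  have H12: "H$1$2 = q" unfolding H_def H_entries q_def by simp
  have H21: "H$2$1 = cnj q" unfolding H_def H_entries q_def by (simp add: mult.commute)
  have r2: "r^2 = (A-D)^2 + 4*cmod q^2" unfolding r_def by simp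
  have r0: "r \<ge> 0" unfolding r_def by simp
  define l where "l = (A + D + r)/2"
  have "(complex_of_real l - H$1$1)*(complex_of_real l - H$2$2) = H$1$2 * H$2$1"
  proof -
    have "(l - A)*(l - D) = cmod q^2" unfolding l_def using r2
      by (simp add: field_simps power2_eq_square)
    then have "complex_of_real ((l - A)*(l - D)) = complex_of_real (cmod q^2)" by simp
    also have "\<dots> = q * cnj q" by (rule complex_norm_square)
    finally have "complex_of_real ((l - A)*(l - D)) = q * cnj q" .
    then show ?thesis by (simp add: H11 H22 H12 H21)
  qed
  then have lin: "complex_of_real l \<in> eigenvalues_mat H" by (rule eig_char)
  have "l \<le> Max (Re ` eigenvalues_mat H)"
  proof -
    have "Re (complex_of_real l) \<in> Re ` eigenvalues_mat H" using lin by blast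
    then show ?thesis using eig_fin[of H] by (simp add: Max_ge)
  qed
  moreover have "r \<ge> 2 * cmod q"
    unfolding r_def by (rule real_le_rsqrt) (simp add: power_mult_distrib)
  then have "l > 1/2" using assms unfolding l_def A_def D_def q_def by (simp add: field_simps)
  ultimately have "(sqrt 2 / 2)^2 < Max (Re ` eigenvalues_mat H)" by (simp add: power_divide)
  then have "sqrt 2 / 2 < sqrt (Max (Re ` eigenvalues_mat H))" by (rule real_less_rsqrt)
  then show ?thesis unfolding max_singular_value_def H_def .
qed


lemma scale_add:
  "mat_scale p1 (mat2 a b c d) + mat_scale p2 (mat2 a' b' c' d') =
   mat2 (p1*a + p2*a') (p1*b + p2*b') (p1*c + p2*c') (p1*d + p2*d')"
  by (simp add: vec_eq_iff forall_2 mat2_def mat_scale_def)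

lemma part1:
  fixes x y w q :: complex
  assumes w: "cmod w = 1" and q: "q = w*x + cnj (w*y)" and q0: "q \<noteq> 0"
  shows "\<exists>p1 p2 :: complex. p1 \<noteq> 0 \<and> p2 \<noteq> 0 \<and> (cmod p1)^2 + (cmod p2)^2 = 1 \<and>
              max_singular_value (mat_scale p1 (mat2 (sqrt 2 / 2) 0 0 (sqrt 2 / 2))
                                  + mat_scale p2 (mat2 0 x y 0)) > sqrt 2 / 2"
proof -
  define S :: real where "S = sqrt 2 / 2"
  define t where "t = cmod q"
  have t0: "t > 0" using q0 by (simp add: t_def)
  define al where "al = 1 / sqrt (1 + t^2)"
  define be where "be = t / sqrt (1 + t^2)"
  have sq: "sqrt (1 + t^2) > 0" by (simp add: add_pos_nonneg)
  have al0: "al > 0" using sq by (simp add: al_def)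
  have be0: "be > 0" using sq t0 by (simp add: be_def)
  have beal: "be = al * t" by (simp add: al_def be_def)
  have sum1: "al^2 + be^2 = 1"
  proof -
    have "(sqrt (1 + t^2))^2 = 1 + t^2" by (simp add: add_pos_nonneg)
    moreover have "1 + t^2 > 0" by (simp add: add_pos_nonneg)
    ultimately show ?thesis unfolding al_def be_def by (simp add: power_divide add_divide_distrib[symmetric])
  qed
  have S2: "S^2 = 1/2" by (simp add: S_def power_divide)
  have S0: "S > 0" by (simp add: S_def)
  define p1 where "p1 = complex_of_real al"
  define p2 where "p2 = complex_of_real be * w"
  have M: "mat_scale p1 (mat2 (sqrt 2 / 2) 0 0 (sqrt 2 / 2)) + mat_scale p2 (mat2 0 x y 0) =
           mat2 (of_real (al*S)) (p2*x) (p2*y) (of_real (al*S))"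
    by (simp add: scale_add p1_def S_def)
  have cr: "cnj (complex_of_real (al*S)) * (p2*x) + cnj (p2*y) * complex_of_real (al*S)
            = complex_of_real (al*be*S) * q"
    by (simp add: p2_def q algebra_simps)
  have n1: "cmod (complex_of_real (al*be*S) * q) = al*be*S*t"
    using al0 be0 S0 by (simp add: norm_mult t_def)
  have n2: "cmod (complex_of_real (al*S))^2 = al^2/2"
    by (simp only: norm_of_real power2_abs power_mult_distrib S2)
  have n3: "cmod (p2*x)^2 = be^2 * cmod x^2" "cmod (p2*y)^2 = be^2 * cmod y^2"
    by (simp_all add: p2_def norm_mult w power_mult_distrib)
  have key: "2 * (al*be*S*t) = sqrt 2 * be^2"
    by (simp add: beal S_def power2_eq_square)
  have "1 - (al^2/2 + be^2 * cmod x^2 + be^2 * cmod y^2 + al^2/2) \<le> be^2"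
  proof -
    have "be^2 * cmod x^2 \<ge> 0" "be^2 * cmod y^2 \<ge> 0" by simp_all
    then show ?thesis using sum1 by linarith
  qed
  also have "be^2 < sqrt 2 * be^2" using be0 by simp
  finally have "2 * cmod (cnj (complex_of_real (al*S)) * (p2*x) + cnj (p2*y) * complex_of_real (al*S))
     > 1 - (cmod (complex_of_real (al*S))^2 + cmod (p2*x)^2 + cmod (p2*y)^2 + cmod (complex_of_real (al*S))^2)"
    unfolding cr n1 n2 n3 key by simp
  then have "max_singular_value (mat2 (of_real (al*S)) (p2*x) (p2*y) (of_real (al*S))) > sqrt 2 / 2"
    by (rule msv_gt)
  moreover have "p1 \<noteq> 0" using al0 by (simp add: p1_def)
  moreover have "p2 \<noteq> 0" using be0 w by (auto simp: p2_def)
  moreover have "(cmod p1)^2 + (cmod p2)^2 = 1" using sum1 al0 be0 by (simp add: p1_def p2_def norm_mult w)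
  ultimately show ?thesis unfolding M[symmetric] by blast
qed


lemma part2:
  fixes z :: complex
  assumes "0 < cmod z"
  shows "\<exists>p1 p2 :: complex. p1 \<noteq> 0 \<and> p2 \<noteq> 0 \<and> (cmod p1)^2 + (cmod p2)^2 = 1 \<and>
              max_singular_value (mat_scale p1 (mat2 (sqrt 2 / 2) 0 0 0)
                                  + mat_scale p2 (mat2 0 (sqrt 2 / 2) z 0)) > sqrt 2 / 2"
proof -
  define S :: real where "S = sqrt 2 / 2"
  have S2: "S^2 = 1/2" by (simp add: S_def power_divide)
  have S0: "S > 0" by (simp add: S_def)
  have SS: "complex_of_real S * complex_of_real S = 1/2"
    by (metis S2 of_real_mult power2_eq_square of_real_divide of_real_1 of_real_numeral)
  define p where "p = complex_of_real S"
  have M: "mat_scale p (mat2 (sqrt 2 / 2) 0 0 0) + mat_scale p (mat2 0 (sqrt 2 / 2) z 0) =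
           mat2 (1/2) (1/2) (p*z) 0"
    by (simp add: scale_add p_def SS flip: S_def)
  have n: "cmod (p*z)^2 = cmod z^2 / 2" by (simp add: p_def norm_mult power_mult_distrib S2)
  have "cmod z^2 > 0" using assms by simp
  then have "2 * cmod (cnj (1/2) * (1/2) + cnj (p*z) * 0) > 1 - (cmod (1/2::complex)^2 + cmod (1/2::complex)^2 + cmod (p*z)^2 + cmod (0::complex)^2)"
    unfolding n by (simp add: power2_eq_square)
  then have "max_singular_value (mat2 (1/2) (1/2) (p*z) 0) > sqrt 2 / 2" by (rule msv_gt)
  moreover have "p \<noteq> 0" using S0 by (simp add: p_def)
  moreover have "(cmod p)^2 + (cmod p)^2 = 1" using S2 S0 by (simp add: p_def)
  ultimately show ?thesis unfolding M[symmetric] by blast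
qed

theorem lemma10:
  shows "(\<forall>x y :: complex. cmod x \<le> sqrt 2 / 2 \<and> cmod y \<le> sqrt 2 / 2 \<and> \<not> (x = 0 \<and> y = 0) \<longrightarrow>
           (\<exists>p1 p2 :: complex. p1 \<noteq> 0 \<and> p2 \<noteq> 0 \<and> (cmod p1)^2 + (cmod p2)^2 = 1 \<and>
              max_singular_value (mat_scale p1 (mat2 (sqrt 2 / 2) 0 0 (sqrt 2 / 2))
                                  + mat_scale p2 (mat2 0 x y 0)) > sqrt 2 / 2))
       \<and> (\<forall>z :: complex. 0 < cmod z \<and> cmod z \<le> sqrt 2 / 2 \<longrightarrow>
           (\<exists>p1 p2 :: complex. p1 \<noteq> 0 \<and> p2 \<noteq> 0 \<and> (cmod p1)^2 + (cmod p2)^2 = 1 \<and>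
              max_singular_value (mat_scale p1 (mat2 (sqrt 2 / 2) 0 0 0)
                                  + mat_scale p2 (mat2 0 (sqrt 2 / 2) z 0)) > sqrt 2 / 2))"
proof (intro conjI allI impI)
  fix x y :: complex assume h: "cmod x \<le> sqrt 2 / 2 \<and> cmod y \<le> sqrt 2 / 2 \<and> \<not> (x = 0 \<and> y = 0)"
  show "\<exists>p1 p2 :: complex. p1 \<noteq> 0 \<and> p2 \<noteq> 0 \<and> (cmod p1)^2 + (cmod p2)^2 = 1 \<and>
              max_singular_value (mat_scale p1 (mat2 (sqrt 2 / 2) 0 0 (sqrt 2 / 2))
                                  + mat_scale p2 (mat2 0 x y 0)) > sqrt 2 / 2"
  proof (cases "1*x + cnj (1*y) = 0")
    case False
    show ?thesis by (rule part1[OF _ refl False]) simp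
  next
    case True
    then have xy: "x = - cnj y" by (simp add: eq_neg_iff_add_eq_0)
    then have "y \<noteq> 0" using h by auto
    then have "\<i>*x + cnj (\<i>*y) \<noteq> 0" using xy by simp
    show ?thesis by (rule part1[OF _ refl \<open>\<i>*x + cnj (\<i>*y) \<noteq> 0\<close>]) simp
  qed
next
  fix z :: complex assume "0 < cmod z \<and> cmod z \<le> sqrt 2 / 2"
  then show "\<exists>p1 p2 :: complex. p1 \<noteq> 0 \<and> p2 \<noteq> 0 \<and> (cmod p1)^2 + (cmod p2)^2 = 1 \<and>
              max_singular_value (mat_scale p1 (mat2 (sqrt 2 / 2) 0 0 0)
                                  + mat_scale p2 (mat2 0 (sqrt 2 / 2) z 0)) > sqrt 2 / 2"
    using part2 by blast
qed

end
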